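(* For every $\beta\geq 1$, $$\lim_{\eta\to\infty}\ \sup_{t\in\mathbb{R}^+}\ \left|p_{\mathrm{W}_1}(t\mid\beta,\eta)-f_{\mathrm{W}}(t\mid\beta,\eta)\right|=0.$$
   Context: For $\eta>0$, $\beta>0$, $f_{\mathrm{W}}(t\mid\beta,\eta)=\frac{\beta}{\eta}\left(\frac{t}{\eta}\right)^{\beta-1}\exp[-(t/\eta)^\beta]$ for $t>0$ (and $0$ at $t=0$ when $\beta>1$; equal to $1/\eta$ at $t=0$ when $\beta=1$) is the density of the continuous Weibull distribution $\mathrm{W}(\eta,\beta)$. The probability mass function of the Weibull-1 distribution $\mathrm{W}_1(\eta,\beta)$ is $p_{\mathrm{W}_1}(n\mid\beta,\eta)=\exp[-((n-1)/\eta)^\beta]-\exp[-(n/\eta)^\beta]=\int_{n-1}^{n}f_{\mathrm{W}}(s\mid\beta,\eta)\,ds$ for integers $n\geq1$; it is extended to real $t\geq 0$ by setting $p_{\mathrm{W}_1}(t\mid\beta,\eta)=p_{\mathrm{W}_1}(n\mid\beta,\eta)$ for $t\in(n-1,n]$ (and, say, $p_{\mathrm{W}_1}(0\mid\beta,\eta)=p_{\mathrm{W}_1}(1\mid\beta,\eta)$), as done in the paper's argument. *)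

theory Defs
  imports Complex_Main
begin

text \<open>Density of the continuous Weibull distribution W(eta, beta), with the
  paper's convention at t = 0 (value 0 if beta > 1, 1/eta if beta = 1).\<close>
definition weibull_pdf :: "real \<Rightarrow> real \<Rightarrow> real \<Rightarrow> real" where
  "weibull_pdf \<beta> \<eta> t =
     (if t > 0 then (\<beta> / \<eta>) * (t / \<eta>) powr (\<beta> - 1) * exp (- ((t / \<eta>) powr \<beta>))
      else if t = 0 then (if \<beta> = 1 then 1 / \<eta> else 0)
      else 0)"

definition weibull1_pmf_nat :: "real \<Rightarrow> real \<Rightarrow> nat \<Rightarrow> real" where
  "weibull1_pmf_nat \<beta> \<eta> n =
     exp (- (((real n - 1) / \<eta>) powr \<beta>)) - exp (- ((real n / \<eta>) powr \<beta>))"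

definition weibull1_pmf :: "real \<Rightarrow> real \<Rightarrow> real \<Rightarrow> real" where
  "weibull1_pmf \<beta> \<eta> t =
     weibull1_pmf_nat \<beta> \<eta> (if t \<le> 0 then 1 else nat \<lceil>t\<rceil>)"

end

theory Submission
  imports Defs
begin

lemma g_bound:
  fixes \<beta> u :: real
  assumes "\<beta> \<ge> 1" "u > 0"
  shows "u powr (\<beta>-1) * exp (-(u powr \<beta>)) \<le> 1"
proof (cases "u \<le> 1")
  case True
  have "u powr (\<beta>-1) \<le> 1" using True assms by (intro powr_le1) auto
  moreover have "exp (-(u powr \<beta>)) \<le> 1" by simp
  ultimately show ?thesis by (simp add: mult_le_one)
next
  case False
  have "u powr (\<beta>-1) \<le> u powr \<beta>" using False by (intro powr_mono) auto
  moreover have "u powr \<beta> * exp (-(u powr \<beta>)) \<le> 1"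
  proof -
    define x where "x = u powr \<beta>"
    have "x \<le> exp x" using exp_ge_add_one_self[of x] by linarith
    hence "x / exp x \<le> 1" by simp
    thus ?thesis by (simp add: x_def exp_minus field_simps)
  qed
  moreover have "exp (-(u powr \<beta>)) \<ge> 0" by simp
  ultimately show ?thesis by (meson mult_right_mono order_trans)
qed

lemma pdf_bound:
  assumes "\<beta> \<ge> 1" "\<eta> > 0" "t \<ge> 0"
  shows "0 \<le> weibull_pdf \<beta> \<eta> t \<and> weibull_pdf \<beta> \<eta> t \<le> \<beta> / \<eta>"
proof (cases "t > 0")
  case True
  have g: "(t/\<eta>) powr (\<beta>-1) * exp (-((t/\<eta>) powr \<beta>)) \<le> 1"
    using assms True by (intro g_bound) auto
  have "weibull_pdf \<beta> \<eta> t = (\<beta>/\<eta>) * ((t/\<eta>) powr (\<beta>-1) * exp (-((t/\<eta>) powr \<beta>)))"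
    using True by (simp add: weibull_pdf_def)
  moreover have "(\<beta>/\<eta>) * ((t/\<eta>) powr (\<beta>-1) * exp (-((t/\<eta>) powr \<beta>))) \<le> (\<beta>/\<eta>) * 1"
    using g assms by (intro mult_left_mono) auto
  moreover have "0 \<le> (\<beta>/\<eta>) * ((t/\<eta>) powr (\<beta>-1) * exp (-((t/\<eta>) powr \<beta>)))"
    using assms by auto
  ultimately show ?thesis by simp
next
  case False
  hence "t = 0" using assms by simp
  thus ?thesis using assms by (auto simp: weibull_pdf_def divide_right_mono)
qed

lemma pmf_nat_bound:
  assumes "\<beta> \<ge> 1" "\<eta> \<ge> 1" "n \<ge> 1"
  shows "0 \<le> weibull1_pmf_nat \<beta> \<eta> n \<and> weibull1_pmf_nat \<beta> \<eta> n \<le> \<beta> / \<eta>"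
proof (cases "n = 1")
  case True
  have a: "(1/\<eta>) powr \<beta> \<le> (1/\<eta>) powr 1"
    using assms by (intro powr_mono') auto
  have b: "(1/\<eta>) powr \<beta> \<ge> 0" by simp
  have "1 - exp (-((1/\<eta>) powr \<beta>)) \<le> (1/\<eta>) powr \<beta>"
    using exp_ge_add_one_self[of "-((1/\<eta>) powr \<beta>)"] by linarith
  moreover have "1/\<eta> \<le> \<beta>/\<eta>" using assms by (simp add: divide_right_mono)
  ultimately show ?thesis using True a b assms by (simp add: weibull1_pmf_nat_def)
next
  case False
  hence n2: "real n - 1 \<ge> 1" using assms by simp
  define h where "h = (\<lambda>x::real. exp (-((x/\<eta>) powr \<beta>)))"
  have d: "(h has_real_derivative - weibull_pdf \<beta> \<eta> x) (at x)" if "real n - 1 \<le> x" for x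
  proof -
    have x: "x > 0" using that n2 by simp
    have "(h has_real_derivative exp (-((x/\<eta>) powr \<beta>)) * (-( \<beta> * (x/\<eta>) powr (\<beta>-1) * (1/\<eta>)))) (at x)"
      unfolding h_def using x assms
      by (auto intro!: derivative_eq_intros)
    moreover have "exp (-((x/\<eta>) powr \<beta>)) * (-( \<beta> * (x/\<eta>) powr (\<beta>-1) * (1/\<eta>))) = - weibull_pdf \<beta> \<eta> x"
      using x by (simp add: weibull_pdf_def)
    ultimately show ?thesis by simp
  qed
  obtain z where z: "z > real n - 1" "z < real n"
    "h (real n) - h (real n - 1) = (real n - (real n - 1)) * (- weibull_pdf \<beta> \<eta> z)"
    using MVT2[of "real n - 1" "real n" h "\<lambda>x. - weibull_pdf \<beta> \<eta> x"] d by auto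
  have "weibull1_pmf_nat \<beta> \<eta> n = weibull_pdf \<beta> \<eta> z"
    using z(3) by (simp add: weibull1_pmf_nat_def h_def)
  moreover have "0 \<le> weibull_pdf \<beta> \<eta> z \<and> weibull_pdf \<beta> \<eta> z \<le> \<beta> / \<eta>"
    using z n2 assms by (intro pdf_bound) auto
  ultimately show ?thesis by simp
qed

lemma pmf_bound:
  assumes "\<beta> \<ge> 1" "\<eta> \<ge> 1"
  shows "0 \<le> weibull1_pmf \<beta> \<eta> t \<and> weibull1_pmf \<beta> \<eta> t \<le> \<beta> / \<eta>"
proof -
  have "(if t \<le> 0 then 1 else nat \<lceil>t\<rceil>) \<ge> (1::nat)"
    by (cases "t \<le> 0") (auto simp: le_nat_iff)
  thus ?thesis unfolding weibull1_pmf_def using assms by (intro pmf_nat_bound) auto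
qed

theorem proposition3:
  fixes \<beta> :: real
  assumes "\<beta> \<ge> 1"
  shows "((\<lambda>\<eta>. SUP t\<in>{0..}. \<bar>weibull1_pmf \<beta> \<eta> t - weibull_pdf \<beta> \<eta> t\<bar>)
           \<longlongrightarrow> 0) at_top"
proof (rule tendsto_sandwich[where f="\<lambda>_. 0" and h="\<lambda>\<eta>. 2*\<beta>/\<eta>"])
  have el: "\<bar>weibull1_pmf \<beta> \<eta> t - weibull_pdf \<beta> \<eta> t\<bar> \<le> 2*\<beta>/\<eta>"
    if "\<eta> \<ge> 1" "t \<ge> 0" for \<eta> t
    using pmf_bound[OF assms that(1), of t] pdf_bound[OF assms _ that(2), of \<eta>] that
    by (auto simp: abs_le_iff)
  have bdd: "bdd_above ((\<lambda>t. \<bar>weibull1_pmf \<beta> \<eta> t - weibull_pdf \<beta> \<eta> t\<bar>) ` {0..})"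
    if "\<eta> \<ge> 1" for \<eta>
    using el[OF that] by (intro bdd_aboveI2[where M="2*\<beta>/\<eta>"]) auto
  show "\<forall>\<^sub>F \<eta> in at_top. 0 \<le> (SUP t\<in>{0..}. \<bar>weibull1_pmf \<beta> \<eta> t - weibull_pdf \<beta> \<eta> t\<bar>)"
    using eventually_ge_at_top[of "1::real"]
  proof eventually_elim
    case (elim \<eta>)
    show ?case by (rule cSUP_upper2[OF bdd[OF elim], of 0]) auto
  qed
  show "\<forall>\<^sub>F \<eta> in at_top. (SUP t\<in>{0..}. \<bar>weibull1_pmf \<beta> \<eta> t - weibull_pdf \<beta> \<eta> t\<bar>) \<le> 2*\<beta>/\<eta>"
    using eventually_ge_at_top[of "1::real"]
  proof eventually_elim
    case (elim \<eta>)
    show ?case by (rule cSUP_least) (use el[OF elim] in auto)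
  qed
  show "((\<lambda>_. 0) \<longlongrightarrow> (0::real)) at_top" by simp
  show "((\<lambda>\<eta>. 2*\<beta>/\<eta>) \<longlongrightarrow> (0::real)) at_top"
    by (intro tendsto_divide_0[OF tendsto_const] filterlim_at_top_imp_at_infinity filterlim_ident)
qed

end
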